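(* Let $d\ge2$, $l\in\{1,\dots,d\}$, $c\in\mathbb R$, and let $H=\{h\in\mathbb R^d:h\cdot e_l=c\}$. Let $x,y\in\mathbb Z^d$ satisfy $x\cdot e_l\ge c$ and $y\cdot e_l>c$. Let $V=\{e_i+e_j,\ e_i-e_j,\ -e_i+e_j,\ -e_i-e_j:\ i,j=1,\dots,d\}$. Fix an integer $m\ge1000$ and suppose $|x-y|_1\le m$. Then there exist $y^*\in\mathbb Z^d$ with $y^*\cdot e_l>c$ and $|y-y^*|_\infty\le1$, an integer $K\le 1609+104^{d-1}$, vectors $v_1,\dots,v_K\in V$ and integers $a_1,\dots,a_K$ such that for each $k\le K$, $$\tfrac{m}{1000}\le|a_k|\le\tfrac{m}{10},\qquad \Big|x+\sum_{i=1}^k a_iv_i-y\Big|_\infty\le2m,\qquad \Big(x+\sum_{i=1}^k a_iv_i\Big)\cdot e_l>c,$$ and $y^*-x=\sum_{i=1}^K a_iv_i$.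
   Context: $e_1,\dots,e_d$ are the standard basis vectors of $\mathbb R^d$. *)

theory Defs
  imports "HOL-Analysis.Analysis"
begin

text \<open>Integer lattice points in R^d are modelled as int^'n (d = CARD('n)).
  Standard basis vector e_i is axis i 1.\<close>

definition l1norm :: "int ^ 'n \<Rightarrow> int" where
  "l1norm x = (\<Sum>i\<in>UNIV. \<bar>x $ i\<bar>)"

definition linfnorm :: "int ^ 'n \<Rightarrow> int" where
  "linfnorm x = Max {\<bar>x $ i\<bar> | i. True}"

definition Vset :: "(int ^ 'n) set" where
  "Vset = {s *s axis i 1 + t *s axis j 1 | i j s t. s \<in> {1, -1} \<and> t \<in> {1, -1}}"

end

theory Submission
  imports Defs
begin

lemma linfnorm_le: "linfnorm (z::int^'n) \<le> b \<longleftrightarrow> (\<forall>i. \<bar>z$i\<bar> \<le> b)"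
proof -
  have e: "{\<bar>z$i\<bar> | i. True} = range (\<lambda>i. \<bar>z$i\<bar>)" by auto
  show ?thesis unfolding linfnorm_def e by (simp add: Max_le_iff)
qed

function dec :: "int \<Rightarrow> int \<Rightarrow> int \<Rightarrow> int list" where
  "dec L U n = (if U \<le> 0 then [] else if n > U then U # dec L U (n - U)
     else if n < -U then (-U) # dec L U (n + U) else if n = 0 then []
     else if L \<le> \<bar>n\<bar> then [n] else if n > 0 then [n + L, -L] else [L, n - L])"
  by pat_completeness auto
termination by (relation "Wellfounded.measure (\<lambda>(L,U,n). nat \<bar>n\<bar>)") auto

declare dec.simps[simp del]

lemma dec_set: "1 \<le> L \<Longrightarrow> 2*L \<le> U \<Longrightarrow> a \<in> set (dec L U n) \<Longrightarrow> L \<le> \<bar>a\<bar> \<and> \<bar>a\<bar> \<le> U"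
proof (induction L U n rule: dec.induct)
  case (1 L U n)
  show ?case
    using 1 by (subst (asm) (2) dec.simps) (auto split: if_splits)
qed

lemma dec_sum: "sum_list (dec L U n) = n \<or> U \<le> 0"
proof (induction L U n rule: dec.induct)
  case (1 L U n)
  show ?case
    using 1 by (subst dec.simps) (auto split: if_splits)
qed

lemma dec_len: "0 < U \<Longrightarrow> int (length (dec L U n)) \<le> \<bar>n\<bar> div U + 2"
proof (induction L U n rule: dec.induct)
  case (1 L U n)
  show ?case
  proof (cases "n > U")
    case True
    have "(n - U) div U = n div U - 1" using 1(3)
      by (metis div_add_self2 diff_add_cancel less_irrefl add_diff_cancel_right')
    then show ?thesis using 1 True by (subst dec.simps) auto
  next
    case F1: False
    show ?thesis
    proof (cases "n < -U")
      case True
      have "(-n - U) div U = (-n) div U - 1" using 1(3)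
        by (metis div_add_self2 diff_add_cancel less_irrefl add_diff_cancel_right')
      then show ?thesis using 1 True F1 by (subst dec.simps) auto
    next
      case False
      have "0 \<le> \<bar>n\<bar> div U" using 1(3) by (simp add: pos_imp_zdiv_nonneg_iff)
      then show ?thesis using 1 False F1 by (subst dec.simps) auto
    qed
  qed
qed

lemma dec_partial: "1 \<le> L \<Longrightarrow> 2*L \<le> U \<Longrightarrow> 1 \<le> k \<Longrightarrow> k \<le> length (dec L U n) \<Longrightarrow>
   n \<noteq> 0 \<and> (n > 0 \<longrightarrow> 1 \<le> sum_list (take k (dec L U n)) \<and> sum_list (take k (dec L U n)) \<le> n + L)
   \<and> (n < 0 \<longrightarrow> n \<le> sum_list (take k (dec L U n)) \<and> sum_list (take k (dec L U n)) \<le> L)"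
proof (induction L U n arbitrary: k rule: dec.induct)
  case (1 L U n)
  show ?case
  proof (cases "n > U")
    case nU: True
    then have d: "dec L U n = U # dec L U (n - U)" using 1 by (subst dec.simps) auto
    show ?thesis
    proof (cases "k = 1")
      case True then show ?thesis using d 1 nU by auto
    next
      case False
      then have t: "take k (dec L U n) = U # take (k-1) (dec L U (n - U))" using d 1 
        by (cases k) auto
      have "n - U \<noteq> 0 \<and> (n - U > 0 \<longrightarrow> 1 \<le> sum_list (take (k-1) (dec L U (n-U))) \<and> sum_list (take (k-1) (dec L U (n-U))) \<le> n - U + L)"
        using 1(1)[of "k-1"] 1(3-) nU False d by auto
      then show ?thesis using t nU 1 by auto
    qed
  next
    case F1: False
    show ?thesis
    proof (cases "n < -U")
      case nU: True
      then have d: "dec L U n = (-U) # dec L U (n + U)" using 1 F1 by (subst dec.simps) auto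
      show ?thesis
      proof (cases "k = 1")
        case True then show ?thesis using d 1 \<open>n < -U\<close> by auto
      next
        case False
        then have t: "take k (dec L U n) = (-U) # take (k-1) (dec L U (n + U))" using d 1 
          by (cases k) auto
        have "n + U \<noteq> 0 \<and> (n + U < 0 \<longrightarrow> n + U \<le> sum_list (take (k-1) (dec L U (n+U))) \<and> sum_list (take (k-1) (dec L U (n+U))) \<le> L)"
          using 1(2)[of "k-1"] 1(3-) nU F1 False d by auto
        then show ?thesis using t nU 1 by auto
      qed
    next
      case False
      have U0: "0 < U" using 1 by linarith
      have d: "dec L U n = (if n = 0 then []
     else if L \<le> \<bar>n\<bar> then [n] else if n > 0 then [n + L, -L] else [L, n - L])"
        using U0 F1 False by (subst dec.simps) simp
      have "k = 1 \<or> k = 2" using 1(5,6) d by (auto split: if_splits)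
      then show ?thesis using 1(3-) d U0 F1 False
        by (auto split: if_splits simp: numeral_2_eq_2)
    qed
  qed
qed


lemma pow_bound: "3 * (n + 1) \<le> 1604 + (104::nat) ^ n"
proof (induction n)
  case (Suc n)
  have "1 \<le> (104::nat) ^ n" by simp
  then show ?case using Suc by (simp; linarith)
qed simp

lemma sum_take_nth:
  "k \<le> length ps \<Longrightarrow> (\<Sum>i=1..k. f (ps ! (i - 1))) = sum_list (map f (take k ps))"
proof (induction k)
  case (Suc k)
  have "(\<Sum>i=1..Suc k. f (ps ! (i - 1))) = (\<Sum>i=1..k. f (ps ! (i - 1))) + f (ps ! k)"
    by simp
  also have "\<dots> = sum_list (map f (take k ps)) + f (ps ! k)" using Suc by simp
  also have "\<dots> = sum_list (map f (take (Suc k) ps))" using Suc(2)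
    by (simp add: take_Suc_conv_app_nth)
  finally show ?case .
qed simp

lemma sum_list_smult: "sum_list (map (\<lambda>a. a *s w) xs) = sum_list xs *s (w::int^'n)"
  by (induction xs) (auto simp: vec_eq_iff algebra_simps)

theorem lemmaA5:
  fixes x y :: "int ^ 'n" and l :: 'n and c :: real and m :: int
  assumes "CARD('n) \<ge> 2"
    and "real_of_int (x $ l) \<ge> c"
    and "real_of_int (y $ l) > c"
    and "m \<ge> 1000"
    and "l1norm (x - y) \<le> m"
  shows "\<exists>ystar :: int ^ 'n. \<exists>K :: nat. \<exists>v :: nat \<Rightarrow> int ^ 'n. \<exists>a :: nat \<Rightarrow> int.
           real_of_int (ystar $ l) > c \<and> linfnorm (y - ystar) \<le> 1 \<and>
           K \<le> 1609 + 104 ^ (CARD('n) - 1) \<and>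
           (\<forall>k\<in>{1..K}. v k \<in> Vset) \<and>
           (\<forall>k\<in>{1..K}.
              real_of_int m / 1000 \<le> real_of_int \<bar>a k\<bar> \<and>
              real_of_int \<bar>a k\<bar> \<le> real_of_int m / 10 \<and>
              linfnorm (x + (\<Sum>i=1..k. a i *s v i) - y) \<le> 2 * m \<and>
              real_of_int ((x + (\<Sum>i=1..k. a i *s v i)) $ l) > c) \<and>
           ystar - x = (\<Sum>i=1..K. a i *s v i)"
proof -
  define L where "L = m div 1000 + 1"
  define U where "U = m div 10"
  have md: "m mod 1000 < 1000" "0 \<le> m mod 1000" "m mod 10 < 10" "0 \<le> m mod 10" by simp_all
  have Lm: "m \<le> 1000 * L" unfolding L_def using md div_mult_mod_eq[of m 1000] by (simp add: algebra_simps; linarith)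
  have mU: "10 * U \<le> m" "m \<le> 10 * U + 9" unfolding U_def using md div_mult_mod_eq[of m 10] by linarith+
  have Lm2: "1000 * L \<le> m + 1000" unfolding L_def using md div_mult_mod_eq[of m 1000] by (simp add: algebra_simps; linarith)
  have L1: "1 \<le> L" unfolding L_def using assms(4) by simp
  have LU: "2 * L \<le> U" using Lm2 mU assms(4) by linarith
  have U100: "100 \<le> U" using mU assms(4) by linarith
  have realL: "real_of_int m / 1000 \<le> real_of_int L" using Lm by linarith
  have realU: "real_of_int U \<le> real_of_int m / 10" using mU(1) by linarith
  define ys :: "int^'n" where "ys = (\<chi> i. y$i + (y$i - x$i) mod 2)"
  define nn where "nn i = (ys$i - x$i) div 2" for i
  have ys_nn: "ys$i - x$i = 2 * nn i" for i
  proof -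
    have e: "ys$i - x$i = (y$i - x$i) + (y$i - x$i) mod 2" unfolding ys_def by simp
    have "t + t mod 2 = 2 * ((t + t mod 2) div 2)" for t :: int by presburger
    then show ?thesis unfolding nn_def e by blast
  qed
  have ys_y: "ys$i = y$i \<or> ys$i = y$i + 1" for i
    unfolding ys_def using pos_mod_bound[of 2 "y$i - x$i"] pos_mod_sign[of 2 "y$i - x$i"] by auto
  have absxy: "\<bar>x$i - y$i\<bar> \<le> m" for i
  proof -
    have "\<bar>(x - y)$i\<bar> \<le> l1norm (x - y)" unfolding l1norm_def
      by (rule member_le_sum) auto
    then show ?thesis using assms(5) by simp
  qed
  have nnb: "2 * \<bar>nn i\<bar> \<le> \<bar>x$i - y$i\<bar> + 1" for i
    using ys_nn[of i] ys_y[of i] by auto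
  define w :: "'n \<Rightarrow> int^'n" where "w i = axis i 1 + axis i 1" for i
  have wV: "w i \<in> Vset" for i
  proof -
    have "w i = 1 *s axis i 1 + 1 *s axis i 1" unfolding w_def by simp
    then show ?thesis unfolding Vset_def by blast
  qed
  define stp where "stp = (\<lambda>p::int \<times> (int^'n). fst p *s snd p)"
  define S where "S ps = sum_list (map stp ps)" for ps
  define Q where "Q p \<longleftrightarrow> linfnorm (p - y) \<le> 2*m \<and> real_of_int (p$l) > c" for p
  define ok where "ok z ps \<longleftrightarrow> (\<forall>k. 1 \<le> k \<longrightarrow> k \<le> length ps \<longrightarrow> Q (z + S (take k ps)))" for z ps
  define vs where "vs ps \<longleftrightarrow> (\<forall>p\<in>set ps. snd p \<in> Vset \<and> real_of_int m/1000 \<le> real_of_int \<bar>fst p\<bar> \<and> real_of_int \<bar>fst p\<bar> \<le> real_of_int m/10)" for ps :: "(int \<times> (int^'n)) list"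
  define cp where "cp i = map (\<lambda>a. (a, w i)) (dec L U (nn i))" for i
  have S_app: "S (ps @ qs) = S ps + S qs" for ps qs unfolding S_def by simp
  have ok_app: "ok z (ps @ qs)" if "ok z ps" "ok (z + S ps) qs" for z ps qs
    unfolding ok_def
  proof (intro allI impI)
    fix k assume k: "1 \<le> k" "k \<le> length (ps @ qs)"
    show "Q (z + S (take k (ps @ qs)))"
    proof (cases "k \<le> length ps")
      case True then show ?thesis using that(1) k unfolding ok_def by simp
    next
      case False
      then have "Q (z + S ps + S (take (k - length ps) qs))" using that(2) k unfolding ok_def by simp
      then show ?thesis using False by (simp add: S_app add.assoc)
    qed
  qed
  have Sw: "S (map (\<lambda>a. (a, w i)) xs) = axis i (2 * sum_list xs)" for i xs
  proof -
    have "S (map (\<lambda>a. (a, w i)) xs) = sum_list (map (\<lambda>a. a *s w i) xs)"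
      unfolding S_def stp_def by (simp add: comp_def)
    also have "\<dots> = sum_list xs *s w i" by (rule sum_list_smult)
    also have "\<dots> = axis i (2 * sum_list xs)" unfolding w_def by (auto simp: vec_eq_iff axis_def)
    finally show ?thesis .
  qed
  have S_cp_take: "S (take k (cp i)) = axis i (2 * sum_list (take k (dec L U (nn i))))" for k i
    unfolding cp_def by (simp add: take_map Sw)
  have S_cp: "S (cp i) = axis i (ys$i - x$i)" for i
    unfolding cp_def Sw using dec_sum[of L U "nn i"] U100 ys_nn[of i] by simp
  have vs_cp: "vs (cp i)" for i
    unfolding vs_def cp_def using dec_set[OF L1 LU] realL realU wV by fastforce
  have len_cp: "int (length (cp i)) \<le> \<bar>nn i\<bar> div U + 2" for i
    unfolding cp_def using dec_len[of U L "nn i"] U100 by simp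
  have ok_cp: "ok z (cp i)" if z1: "z$i = x$i" and z2: "\<forall>j. z$j = x$j \<or> z$j = ys$j"
      and z3: "i = l \<or> z$l = ys$l" for z i
    unfolding ok_def
  proof (intro allI impI)
    fix k assume k: "1 \<le> k" "k \<le> length (cp i)"
    define P where "P = sum_list (take k (dec L U (nn i)))"
    have Pb: "nn i \<noteq> 0 \<and> (nn i > 0 \<longrightarrow> 1 \<le> P \<and> P \<le> nn i + L) \<and> (nn i < 0 \<longrightarrow> nn i \<le> P \<and> P \<le> L)"
      unfolding P_def using dec_partial[OF L1 LU k(1)] k(2) unfolding cp_def by simp
    have pj: "(z + S (take k (cp i)))$j = z$j + (if j = i then 2 * P else 0)" for j
      unfolding S_cp_take P_def by (simp add: axis_def)
    have "\<bar>(z + S (take k (cp i)) - y)$j\<bar> \<le> 2 * m" for j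
    proof (cases "j = i")
      case True
      then show ?thesis using pj[of j] z1 Pb ys_nn[of i] ys_y[of i] absxy[of i] LU realU mU assms(4)
        by (auto simp: abs_le_iff)
    next
      case False
      have "z$j = x$j \<or> z$j = ys$j" using z2 by blast
      then show ?thesis using False pj[of j] ys_y[of j] absxy[of j] assms(4) by auto
    qed
    moreover have "real_of_int ((z + S (take k (cp i)))$l) > c"
    proof (cases "i = l")
      case True
      have "x$l < (z + S (take k (cp i)))$l \<or> y$l \<le> (z + S (take k (cp i)))$l"
        using pj[of l] True z1 Pb ys_nn[of l] ys_y[of l] by auto
      then show ?thesis using assms(2,3) by (auto simp del: vector_add_component)
    next
      case False
      then have "(z + S (take k (cp i)))$l = ys$l" using pj[of l] z3 by simp
      then show ?thesis using ys_y[of l] assms(3) by auto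
    qed
    ultimately show "Q (z + S (take k (cp i)))" unfolding Q_def linfnorm_le by blast
  qed
  have main: "distinct cs \<Longrightarrow> l \<notin> set cs \<Longrightarrow> (\<forall>j\<in>set cs. z$j = x$j) \<Longrightarrow>
     (\<forall>j. z$j = x$j \<or> z$j = ys$j) \<Longrightarrow> z$l = ys$l \<Longrightarrow>
     \<exists>ps. ok z ps \<and> vs ps \<and> int (length ps) \<le> (\<Sum>i\<leftarrow>cs. \<bar>nn i\<bar> div U + 2) \<and>
        z + S ps = (\<chi> j. if j \<in> set cs then ys$j else z$j)" for cs z
  proof (induction cs arbitrary: z)
    case Nil
    have "ok z []" unfolding ok_def by simp
    moreover have "vs []" unfolding vs_def by simp
    ultimately show ?case by (intro exI[of _ "[]"]) (simp add: S_def vec_eq_iff)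
  next
    case (Cons i cs)
    define z' where "z' = z + S (cp i)"
    have z'j: "z'$j = (if j = i then ys$j else z$j)" for j
      unfolding z'_def S_cp using Cons.prems(3) by (auto simp: axis_def)
    have il: "i \<noteq> l" using Cons.prems(2) by auto
    have ok1: "ok z (cp i)" by (rule ok_cp) (use Cons.prems il in auto)
    obtain ps where ps: "ok z' ps" "vs ps" "int (length ps) \<le> (\<Sum>i\<leftarrow>cs. \<bar>nn i\<bar> div U + 2)"
      "z' + S ps = (\<chi> j. if j \<in> set cs then ys$j else z'$j)"
    proof -
      have p1: "\<forall>j\<in>set cs. z'$j = x$j" using Cons.prems(1,3) z'j by auto
      have p2: "\<forall>j. z'$j = x$j \<or> z'$j = ys$j" using Cons.prems(4) z'j by metis
      have p3: "z'$l = ys$l" using Cons.prems(5) z'j il by simp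
      show ?thesis using Cons.IH[OF _ _ p1 p2 p3] Cons.prems(1,2) that by auto
    qed
    have "ok z (cp i @ ps)" using ok_app[OF ok1] ps(1) unfolding z'_def by simp
    moreover have "vs (cp i @ ps)" using vs_cp[of i] ps(2) unfolding vs_def by auto
    moreover have "int (length (cp i @ ps)) \<le> (\<Sum>i\<leftarrow>i # cs. \<bar>nn i\<bar> div U + 2)"
      using len_cp[of i] ps(3) by simp
    moreover have "z + S (cp i @ ps) = (\<chi> j. if j \<in> set (i # cs) then ys$j else z$j)"
      using ps(4) z'j unfolding S_app z'_def by (auto simp: vec_eq_iff add.assoc)
    ultimately show ?case by blast
  qed
  obtain cs where cs: "set cs = UNIV - {l}" "distinct cs"
    using finite_distinct_list[of "UNIV - {l}"] by auto
  define z0 where "z0 = x + S (cp l)"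
  have z0j: "z0$j = (if j = l then ys$j else x$j)" for j
    unfolding z0_def S_cp by (auto simp: axis_def)
  have ok0: "ok x (cp l)" by (rule ok_cp) auto
  obtain ps where ps: "ok z0 ps" "vs ps" "int (length ps) \<le> (\<Sum>i\<leftarrow>cs. \<bar>nn i\<bar> div U + 2)"
      "z0 + S ps = (\<chi> j. if j \<in> set cs then ys$j else z0$j)"
  proof -
    have p1: "\<forall>j\<in>set cs. z0$j = x$j" using cs z0j by auto
    have p2: "\<forall>j. z0$j = x$j \<or> z0$j = ys$j" using z0j by metis
    have p3: "z0$l = ys$l" using z0j by simp
    show ?thesis using main[OF cs(2) _ p1 p2 p3] cs that by auto
  qed
  define qs where "qs = cp l @ ps"
  have okq: "ok x qs" unfolding qs_def using ok_app[OF ok0] ps(1) unfolding z0_def by simp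
  have vsq: "vs qs" unfolding qs_def using vs_cp[of l] ps(2) unfolding vs_def by auto
  have endq: "x + S qs = ys" unfolding qs_def S_app
    using ps(4) z0j cs(1) unfolding z0_def by (auto simp: vec_eq_iff add.assoc)
  define f where "f i = \<bar>nn i\<bar> div U + 2" for i
  have lenq: "int (length qs) \<le> (\<Sum>i\<in>UNIV. f i)"
  proof -
    have "(\<Sum>i\<leftarrow>cs. f i) = (\<Sum>i\<in>UNIV - {l}. f i)"
      using cs by (simp add: sum_list_distinct_conv_sum_set)
    moreover have "(\<Sum>i\<in>UNIV. f i) = f l + (\<Sum>i\<in>UNIV - {l}. f i)"
      by (simp add: sum.remove)
    ultimately show ?thesis using len_cp[of l] ps(3) unfolding qs_def f_def by simp
  qed
  define d where "d = CARD('n)"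
  define T where "T = (\<Sum>i\<in>UNIV. \<bar>nn i\<bar> div U)"
  have sumf: "(\<Sum>i\<in>UNIV. f i) = T + 2 * int d"
    unfolding f_def T_def d_def by (simp add: sum.distrib)
  have T0: "0 \<le> T" unfolding T_def using U100 by (intro sum_nonneg) (simp add: pos_imp_zdiv_nonneg_iff)
  have "U * T \<le> (\<Sum>i\<in>UNIV. \<bar>nn i\<bar>)"
    unfolding T_def sum_distrib_left
  proof (rule sum_mono)
    fix i
    show "U * (\<bar>nn i\<bar> div U) \<le> \<bar>nn i\<bar>"
      using minus_mod_eq_mult_div[of "\<bar>nn i\<bar>" U] pos_mod_sign[of U "\<bar>nn i\<bar>"] U100 by linarith
  qed
  moreover have "2 * (\<Sum>i\<in>UNIV. \<bar>nn i\<bar>) \<le> (\<Sum>i\<in>UNIV. \<bar>x$i - y$i\<bar> + 1)"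
    unfolding sum_distrib_left by (rule sum_mono) (use nnb in auto)
  moreover have "(\<Sum>i\<in>UNIV. \<bar>x$i - y$i\<bar> + 1) = l1norm (x - y) + int d"
    unfolding l1norm_def d_def by (simp add: sum.distrib)
  ultimately have UT: "2 * U * T \<le> m + int d" using assms(5) by linarith
  have Td: "T \<le> 5 + int d"
  proof (rule ccontr)
    assume "\<not> ?thesis"
    then have "6 + int d \<le> T" by linarith
    then have "2 * U * (6 + int d) \<le> 2 * U * T" using U100 by (intro mult_left_mono) auto
    moreover have "100 * int d \<le> U * int d" using U100 by (intro mult_right_mono) auto
    ultimately show False using UT mU U100 by (simp add: algebra_simps)
  qed
  have d1: "1 \<le> d" unfolding d_def by simp
  have "3 * (d - 1 + 1) \<le> 1604 + (104::nat) ^ (d - 1)" by (rule pow_bound)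
  then have Kb: "length qs \<le> 1609 + 104 ^ (CARD('n) - 1)"
    using lenq sumf Td d1 unfolding d_def by simp
  define K where "K = length qs"
  define a where "a k = fst (qs ! (k - 1))" for k
  define v where "v k = snd (qs ! (k - 1))" for k
  have sumeq: "(\<Sum>i=1..k. a i *s v i) = S (take k qs)" if "k \<le> K" for k
    unfolding a_def v_def S_def stp_def using sum_take_nth[of k qs stp] that unfolding K_def stp_def
    by simp
  show ?thesis
  proof (intro exI conjI ballI)
    show "c < real_of_int (ys $ l)" using ys_y[of l] assms(3) by auto
    show "linfnorm (y - ys) \<le> 1" unfolding linfnorm_le
    proof
      fix i show "\<bar>(y - ys)$i\<bar> \<le> 1" using ys_y[of i] by auto
    qed
    show "K \<le> 1609 + 104 ^ (CARD('n) - 1)" using Kb unfolding K_def .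
    show "ys - x = (\<Sum>i = 1..K. a i *s v i)" 
    proof -
      have "ys - x = S qs" using endq by (metis add_diff_cancel_left')
      then show ?thesis using sumeq[of K] unfolding K_def by simp
    qed
  next
    fix k assume k: "k \<in> {1..K}"
    then have mem: "qs ! (k - 1) \<in> set qs" unfolding K_def by auto
    show "v k \<in> Vset" using vsq mem unfolding vs_def v_def by auto
  next
    fix k assume k: "k \<in> {1..K}"
    then have mem: "qs ! (k - 1) \<in> set qs" unfolding K_def by auto
    show "real_of_int m / 1000 \<le> real_of_int \<bar>a k\<bar>" "real_of_int \<bar>a k\<bar> \<le> real_of_int m / 10"
      using vsq mem unfolding vs_def a_def by auto
    have "Q (x + S (take k qs))" using okq k unfolding ok_def K_def by auto
    then show "linfnorm (x + (\<Sum>i = 1..k. a i *s v i) - y) \<le> 2 * m"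
      "c < real_of_int ((x + (\<Sum>i = 1..k. a i *s v i)) $ l)"
      using sumeq[of k] k unfolding Q_def by auto
  qed
qed

end
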